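(* For every $s\in S$ and $\tau\in\mathcal K^J$, one has $\mathrm{ht}(s\tau)=\mathrm{ht}(\tau)$ if and only if $s\tau=\tau$.
   Context: Let $(W,S)$ be a finite Coxeter system with length function $\ell$, Bruhat order $\le$, and reflections $T=\{wsw^{-1}:w\in W,s\in S\}$. Let $\mathrm{Aut}(W,S)$ be the automorphisms $\varphi$ of $W$ with $\varphi(S)=S$, and $W^+=W\rtimes\mathrm{Aut}(W,S)$ the group of pairs $(w,\varphi)$ with $(v,\alpha)(w,\beta)=(v\,\alpha(w),\alpha\beta)$; set $\ell(w,\varphi)=\ell(w)$ and identify $w$ with $(w,1)$. $z\in W^+$ is a perfect involution if $z^2=1$ and $(zt)^4=1$ for all $t\in T$. For $J\subseteq S$: $W_J=\langle J\rangle$; $\mathscr I_J$ is the set of perfect involutions of $(W_J)^+=W_J\rtimes\mathrm{Aut}(W_J,J)$, on which $W_J$ acts by $v:(y,\theta)\mapsto(v\,y\,\theta(v)^{-1},\theta)$; $z\in\mathscr I_J$ is $W_J$-minimal if $\ell(szs)\ge\ell(z)$ for all $s\in J$ (each $W_J$-conjugacy class in $\mathscr I_J$ has a unique $W_J$-minimal element). $W^J=\{w\in W:\ell(ws)>\ell(w)\ \forall s\in J\}$, $\mathcal K^J=W^J\times\mathscr I_J$. For $\tau=(w,z)\in\mathcal K^J$, $\mathrm{ht}(\tau)=\ell(w)+\tfrac12(\ell(z)-\ell(z_{\min}))$ with $z_{\min}$ the $W_J$-minimal conjugate of $z$. For $s\in S$: $s\tau=(sw,z)$ if $sw\in W^J$;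 otherwise $t:=w^{-1}sw\in J$ and $s\tau=(w,tzt)$. This extends to an action of $W$ on $\mathcal K^J$. *)

theory Defs
  imports "HOL-Algebra.Algebra"
begin

definition word_prod :: "('w, 'b) monoid_scheme \<Rightarrow> 'w list \<Rightarrow> 'w" where
  "word_prod G ws = foldr (\<lambda>x y. x \<otimes>\<^bsub>G\<^esub> y) ws \<one>\<^bsub>G\<^esub>"

definition cox_relators :: "('w, 'b) monoid_scheme \<Rightarrow> 'w set \<Rightarrow> 'w list set" where
  "cox_relators G S =
     {[s, s] | s. s \<in> S} \<union>
     {concat (replicate (group.ord G (s \<otimes>\<^bsub>G\<^esub> t)) [s, t]) | s t. s \<in> S \<and> t \<in> S}"

definition cox_step :: "('w, 'b) monoid_scheme \<Rightarrow> 'w set \<Rightarrow> 'w list \<Rightarrow> 'w list \<Rightarrow> bool" where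
  "cox_step G S u v \<longleftrightarrow> (\<exists>xs ys r. r \<in> cox_relators G S \<and> u = xs @ ys \<and> v = xs @ r @ ys)"

definition cox_equiv :: "('w, 'b) monoid_scheme \<Rightarrow> 'w set \<Rightarrow> 'w list \<Rightarrow> 'w list \<Rightarrow> bool" where
  "cox_equiv G S = (\<lambda>u v. cox_step G S u v \<or> cox_step G S v u)\<^sup>*\<^sup>*"

text \<open>(G,S) is a Coxeter system: S is a set of involutions generating G, and
  every word over S whose product is trivial is a consequence of the Coxeter
  relations, i.e. G = < S | s^2, (st)^m(s,t) >.\<close>
definition coxeter_system :: "('w, 'b) monoid_scheme \<Rightarrow> 'w set \<Rightarrow> bool" where
  "coxeter_system G S \<longleftrightarrow>
     group G \<and> S \<subseteq> carrier G \<and> \<one>\<^bsub>G\<^esub> \<notin> S \<and>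
     (\<forall>s\<in>S. s \<otimes>\<^bsub>G\<^esub> s = \<one>\<^bsub>G\<^esub>) \<and>
     generate G S = carrier G \<and>
     (\<forall>ws \<in> lists S. word_prod G ws = \<one>\<^bsub>G\<^esub> \<longrightarrow> cox_equiv G S ws [])"

definition cox_length :: "('w, 'b) monoid_scheme \<Rightarrow> 'w set \<Rightarrow> 'w \<Rightarrow> nat" where
  "cox_length G S w = (LEAST n. \<exists>ws \<in> lists S. length ws = n \<and> word_prod G ws = w)"

definition parabolic :: "('w, 'b) monoid_scheme \<Rightarrow> 'w set \<Rightarrow> 'w set" where
  "parabolic G J = generate G J"

definition reflections :: "('w, 'b) monoid_scheme \<Rightarrow> 'w set \<Rightarrow> 'w set" where
  "reflections G J = {v \<otimes>\<^bsub>G\<^esub> s \<otimes>\<^bsub>G\<^esub> inv\<^bsub>G\<^esub> v | v s. v \<in> parabolic G J \<and> s \<in> J}"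

definition diagram_auts :: "('w, 'b) monoid_scheme \<Rightarrow> 'w set \<Rightarrow> ('w \<Rightarrow> 'w) set" where
  "diagram_auts G J =
     {\<theta>. \<theta> \<in> iso (G\<lparr>carrier := parabolic G J\<rparr>) (G\<lparr>carrier := parabolic G J\<rparr>) \<and>
          \<theta> \<in> extensional (parabolic G J) \<and> \<theta> ` J = J}"

text \<open>Elements of (W_J)^+ = W_J \<rtimes> Aut(W_J,J).\<close>
definition plus_carrier :: "('w, 'b) monoid_scheme \<Rightarrow> 'w set \<Rightarrow> ('w \<times> ('w \<Rightarrow> 'w)) set" where
  "plus_carrier G J = parabolic G J \<times> diagram_auts G J"

definition plus_mult :: "('w, 'b) monoid_scheme \<Rightarrow> 'w set \<Rightarrow>
    'w \<times> ('w \<Rightarrow> 'w) \<Rightarrow> 'w \<times> ('w \<Rightarrow> 'w) \<Rightarrow> 'w \<times> ('w \<Rightarrow> 'w)" where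
  "plus_mult G J x y =
     (fst x \<otimes>\<^bsub>G\<^esub> snd x (fst y), compose (parabolic G J) (snd x) (snd y))"

definition plus_one :: "('w, 'b) monoid_scheme \<Rightarrow> 'w set \<Rightarrow> 'w \<times> ('w \<Rightarrow> 'w)" where
  "plus_one G J = (\<one>\<^bsub>G\<^esub>, restrict id (parabolic G J))"

definition plus_embed :: "('w, 'b) monoid_scheme \<Rightarrow> 'w set \<Rightarrow> 'w \<Rightarrow> 'w \<times> ('w \<Rightarrow> 'w)" where
  "plus_embed G J w = (w, restrict id (parabolic G J))"

definition perfect_involutions :: "('w, 'b) monoid_scheme \<Rightarrow> 'w set \<Rightarrow> ('w \<times> ('w \<Rightarrow> 'w)) set" where
  "perfect_involutions G J =
     {z \<in> plus_carrier G J. plus_mult G J z z = plus_one G J \<and>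
        (\<forall>t \<in> reflections G J.
           (let u = plus_mult G J z (plus_embed G J t);
                u2 = plus_mult G J u u
            in plus_mult G J u2 u2 = plus_one G J))}"

definition twisted_act :: "('w, 'b) monoid_scheme \<Rightarrow> 'w \<Rightarrow> 'w \<times> ('w \<Rightarrow> 'w) \<Rightarrow> 'w \<times> ('w \<Rightarrow> 'w)" where
  "twisted_act G v z = (v \<otimes>\<^bsub>G\<^esub> fst z \<otimes>\<^bsub>G\<^esub> inv\<^bsub>G\<^esub> (snd z v), snd z)"

definition plus_length :: "('w, 'b) monoid_scheme \<Rightarrow> 'w set \<Rightarrow> 'w \<times> ('w \<Rightarrow> 'w) \<Rightarrow> nat" where
  "plus_length G S z = cox_length G S (fst z)"

definition WJ_minimal :: "('w, 'b) monoid_scheme \<Rightarrow> 'w set \<Rightarrow> 'w set \<Rightarrow> 'w \<times> ('w \<Rightarrow> 'w) \<Rightarrow> bool" where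
  "WJ_minimal G S J z \<longleftrightarrow> z \<in> perfect_involutions G J \<and>
     (\<forall>s\<in>J. plus_length G S (plus_mult G J (plus_mult G J (plus_embed G J s) z) (plus_embed G J s))
             \<ge> plus_length G S z)"

text \<open>The (unique) W_J-minimal element of the W_J-conjugacy class of z.\<close>
definition min_conj :: "('w, 'b) monoid_scheme \<Rightarrow> 'w set \<Rightarrow> 'w set \<Rightarrow> 'w \<times> ('w \<Rightarrow> 'w) \<Rightarrow> 'w \<times> ('w \<Rightarrow> 'w)" where
  "min_conj G S J z =
     (THE z'. (\<exists>v \<in> parabolic G J. z' = twisted_act G v z) \<and> WJ_minimal G S J z')"

definition min_coset_reps :: "('w, 'b) monoid_scheme \<Rightarrow> 'w set \<Rightarrow> 'w set \<Rightarrow> 'w set" where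
  "min_coset_reps G S J =
     {w \<in> carrier G. \<forall>s\<in>J. cox_length G S (w \<otimes>\<^bsub>G\<^esub> s) > cox_length G S w}"

definition KJ :: "('w, 'b) monoid_scheme \<Rightarrow> 'w set \<Rightarrow> 'w set \<Rightarrow> ('w \<times> ('w \<times> ('w \<Rightarrow> 'w))) set" where
  "KJ G S J = min_coset_reps G S J \<times> perfect_involutions G J"

definition ht :: "('w, 'b) monoid_scheme \<Rightarrow> 'w set \<Rightarrow> 'w set \<Rightarrow> 'w \<times> ('w \<times> ('w \<Rightarrow> 'w)) \<Rightarrow> real" where
  "ht G S J \<tau> = real (cox_length G S (fst \<tau>)) +
     (real (plus_length G S (snd \<tau>)) - real (plus_length G S (min_conj G S J (snd \<tau>)))) / 2"

definition simple_act :: "('w, 'b) monoid_scheme \<Rightarrow> 'w set \<Rightarrow> 'w set \<Rightarrow> 'w \<Rightarrow>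
    'w \<times> ('w \<times> ('w \<Rightarrow> 'w)) \<Rightarrow> 'w \<times> ('w \<times> ('w \<Rightarrow> 'w))" where
  "simple_act G S J s \<tau> =
     (let w = fst \<tau>; z = snd \<tau> in
      if s \<otimes>\<^bsub>G\<^esub> w \<in> min_coset_reps G S J then (s \<otimes>\<^bsub>G\<^esub> w, z)
      else (let t = inv\<^bsub>G\<^esub> w \<otimes>\<^bsub>G\<^esub> s \<otimes>\<^bsub>G\<^esub> w in
            (w, plus_mult G J (plus_mult G J (plus_embed G J t) z) (plus_embed G J t))))"

end

theory Submission
  imports Defs
begin

definition cj :: "('w,'b) monoid_scheme \<Rightarrow> 'w \<Rightarrow> 'w \<Rightarrow> 'w" where
  "cj G x r = x \<otimes>\<^bsub>G\<^esub> r \<otimes>\<^bsub>G\<^esub> inv\<^bsub>G\<^esub> x"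

fun rl :: "('w,'b) monoid_scheme \<Rightarrow> 'w list \<Rightarrow> 'w list" where
  "rl G [] = []"
| "rl G (q#ws) = q # map (cj G q) (rl G ws)"

lemma wp_Nil[simp]: "word_prod G [] = \<one>\<^bsub>G\<^esub>" by (simp add: word_prod_def)
lemma wp_Cons[simp]: "word_prod G (q#ws) = q \<otimes>\<^bsub>G\<^esub> word_prod G ws" by (simp add: word_prod_def)

context group begin

lemma wp_closed[simp]: "set ws \<subseteq> carrier G \<Longrightarrow> word_prod G ws \<in> carrier G"
  by (induction ws) auto

lemma wp_append: "set xs \<subseteq> carrier G \<Longrightarrow> set ys \<subseteq> carrier G \<Longrightarrow>
   word_prod G (xs @ ys) = word_prod G xs \<otimes> word_prod G ys"
  by (induction xs) (auto simp: m_assoc)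

lemma cj_closed[simp]: "x \<in> carrier G \<Longrightarrow> r \<in> carrier G \<Longrightarrow> cj G x r \<in> carrier G"
  by (simp add: cj_def)

lemma cj_cj: "x \<in> carrier G \<Longrightarrow> y \<in> carrier G \<Longrightarrow> r \<in> carrier G \<Longrightarrow> cj G x (cj G y r) = cj G (x \<otimes> y) r"
  by (simp add: cj_def m_assoc inv_mult_group)

lemma cj_one[simp]: "r \<in> carrier G \<Longrightarrow> cj G \<one> r = r"
  by (simp add: cj_def)

lemma rl_closed: "set ws \<subseteq> carrier G \<Longrightarrow> set (rl G ws) \<subseteq> carrier G"
  by (induction ws) auto

lemma rl_append: "set xs \<subseteq> carrier G \<Longrightarrow> set ys \<subseteq> carrier G \<Longrightarrow>
   rl G (xs @ ys) = rl G xs @ map (cj G (word_prod G xs)) (rl G ys)"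
proof (induction xs)
  case Nil
  have "map (cj G \<one>) (rl G ys) = rl G ys"
    by (rule map_idI) (use Nil rl_closed[of ys] in auto)
  then show ?case by simp
next
  case (Cons q xs)
  then have "map (cj G q) (map (cj G (word_prod G xs)) (rl G ys)) = map (cj G (q \<otimes> word_prod G xs)) (rl G ys)"
    using rl_closed[of ys] by (auto simp: cj_cj)
  with Cons show ?case by simp
qed

lemma rl_length[simp]: "length (rl G ws) = length ws"
  by (induction ws) auto

lemma wp_rev: "\<And>ws. set ws \<subseteq> carrier G \<Longrightarrow> (\<forall>q\<in>set ws. q \<otimes> q = \<one>) \<Longrightarrow>
   word_prod G (rev ws) = inv (word_prod G ws)"
proof -
  fix ws show "set ws \<subseteq> carrier G \<Longrightarrow> (\<forall>q\<in>set ws. q \<otimes> q = \<one>) \<Longrightarrow>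
   word_prod G (rev ws) = inv (word_prod G ws)"
  proof (induction ws)
    case Nil then show ?case by simp
  next
    case (Cons q ws)
    have qi: "inv q = q" using Cons.prems by (simp add: inv_equality)
    have "word_prod G (rev (q#ws)) = word_prod G (rev ws) \<otimes> q"
      using Cons.prems by (simp add: wp_append)
    also have "\<dots> = inv (word_prod G ws) \<otimes> inv q" using Cons qi by simp
    also have "\<dots> = inv (q \<otimes> word_prod G ws)" using Cons.prems by (simp add: inv_mult_group)
    finally show ?case by simp
  qed
qed

lemma rl_rev: "set vs \<subseteq> carrier G \<Longrightarrow> (\<forall>q\<in>set vs. q \<otimes> q = \<one>) \<Longrightarrow>
   rl G (rev vs) = rev (map (cj G (inv (word_prod G vs))) (rl G vs))"
proof (induction vs)
  case Nil then show ?case by simp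
next
  case (Cons q vs)
  let ?v = "word_prod G vs"
  have q: "q \<in> carrier G" "q \<otimes> q = \<one>" using Cons.prems by auto
  have qi: "inv q = q" using q by (simp add: inv_equality)
  have vc: "?v \<in> carrier G" using Cons.prems by auto
  have rc: "set (rl G vs) \<subseteq> carrier G" using Cons.prems rl_closed by auto
  have "rl G (rev (q#vs)) = rl G (rev vs) @ map (cj G (word_prod G (rev vs))) [q]"
    using Cons.prems by (simp add: rl_append)
  also have "\<dots> = rev (map (cj G (inv ?v)) (rl G vs)) @ [cj G (inv ?v) q]"
    using Cons by (simp add: wp_rev)
  finally have L: "rl G (rev (q#vs)) = rev (map (cj G (inv ?v)) (rl G vs)) @ [cj G (inv ?v) q]" .
  have e1: "inv (q \<otimes> ?v) = inv ?v \<otimes> q" using q qi vc by (simp add: inv_mult_group)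
  have e2: "cj G (inv ?v \<otimes> q) q = cj G (inv ?v) q"
    using q qi vc by (simp add: cj_def m_assoc inv_mult_group)
  have e3: "map (cj G (inv ?v \<otimes> q)) (map (cj G q) (rl G vs)) = map (cj G (inv ?v)) (rl G vs)"
    using rc q vc by (auto simp: cj_cj m_assoc)
  show ?case using L e1 e2 e3 by simp
qed

definition alt :: "'a \<Rightarrow> 'a \<Rightarrow> nat \<Rightarrow> 'a list" where
  "alt a b n = concat (replicate n [a, b])"

lemma alt_Suc: "alt a b (Suc n) = alt a b n @ [a, b]"
  unfolding alt_def by (metis concat.simps(1) concat.simps(2) concat_append append_Nil2 replicate_Suc replicate_append_same)

lemma alt_set: "set (alt a b n) \<subseteq> {a, b}"
  unfolding alt_def by auto

lemma inv_pow_conj: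
  assumes a: "a \<in> carrier G" "a \<otimes> a = \<one>" and x: "x \<in> carrier G" and ax: "a \<otimes> inv x \<otimes> a = x"
  shows "a \<otimes> inv x [^] (n::nat) \<otimes> a = x [^] n"
proof (induction n)
  case 0 then show ?case using a by simp
next
  case (Suc n)
  have "a \<otimes> inv x [^] Suc n \<otimes> a = (a \<otimes> inv x [^] n \<otimes> a) \<otimes> (a \<otimes> inv x \<otimes> a)"
    using a x by (simp add: m_assoc[symmetric])  (simp add: m_assoc)
  also have "\<dots> = x [^] Suc n" using Suc ax by simp
  finally show ?case .
qed

lemma wp_alt: "a \<in> carrier G \<Longrightarrow> b \<in> carrier G \<Longrightarrow> word_prod G (alt a b n) = (a \<otimes> b) [^] n"
proof (induction n)
  case 0 then show ?case by (simp add: alt_def)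
next
  case (Suc n)
  have "set (alt a b n) \<subseteq> carrier G" using alt_set[of a b n] Suc.prems by auto
  then show ?case using Suc by (simp add: alt_Suc wp_append m_assoc)
qed

lemma rl_alt:
  assumes a: "a \<in> carrier G" "a \<otimes> a = \<one>" and b: "b \<in> carrier G" "b \<otimes> b = \<one>"
  shows "rl G (alt a b n) = map (\<lambda>j. (a \<otimes> b) [^] j \<otimes> a) [0..<2*n]"
proof (induction n)
  case 0 then show ?case by (simp add: alt_def)
next
  case (Suc n)
  define x where "x = a \<otimes> b"
  have xc: "x \<in> carrier G" using a b by (simp add: x_def)
  have ai: "inv a = a" using a by (simp add: inv_equality)
  have bi: "inv b = b" using b by (simp add: inv_equality)
  have ix: "inv x = b \<otimes> a" using a b ai bi by (simp add: x_def inv_mult_group)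
  have ax: "a \<otimes> inv x \<otimes> a = x" using a b ix by (simp add: x_def m_assoc)
  have key: "a \<otimes> inv x [^] n = x [^] n \<otimes> a"
  proof -
    have "a \<otimes> inv x [^] n = (a \<otimes> inv x [^] n \<otimes> a) \<otimes> a" using a xc by (simp add: m_assoc)
    also have "\<dots> = x [^] n \<otimes> a" using inv_pow_conj[OF a xc ax] by simp
    finally show ?thesis .
  qed
  have st: "set (alt a b n) \<subseteq> carrier G" using alt_set[of a b n] a b by auto
  have w: "word_prod G (alt a b n) = x [^] n" using wp_alt a b by (simp add: x_def)
  have c1: "cj G (x [^] n) a = x [^] (2*n) \<otimes> a"
  proof -
    have "cj G (x [^] n) a = x [^] n \<otimes> (a \<otimes> inv x [^] n)"
      using xc a by (simp add: cj_def m_assoc nat_pow_inv)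
    also have "\<dots> = x [^] n \<otimes> x [^] n \<otimes> a" using key xc a by (simp add: m_assoc)
    also have "\<dots> = x [^] (2*n) \<otimes> a" using xc by (simp add: nat_pow_mult mult_2)
    finally show ?thesis .
  qed
  have c2: "cj G (x [^] n) (cj G a b) = x [^] (Suc (2*n)) \<otimes> a"
  proof -
    have "cj G (x [^] n) (cj G a b) = x [^] n \<otimes> x \<otimes> (a \<otimes> inv x [^] n)"
      using xc a b ai by (simp add: cj_def m_assoc nat_pow_inv x_def)
    also have "\<dots> = x [^] n \<otimes> x \<otimes> x [^] n \<otimes> a" using key xc a by (simp add: m_assoc)
    also have "\<dots> = x [^] (Suc (2*n)) \<otimes> a" using xc
      by (simp add: nat_pow_mult mult_2 nat_pow_Suc2[symmetric]) (metis nat_pow_Suc nat_pow_mult add_Suc)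
    finally show ?thesis .
  qed
  have "rl G (alt a b (Suc n)) = rl G (alt a b n) @ map (cj G (x [^] n)) [a, cj G a b]"
    using st a b w by (simp add: alt_Suc rl_append)
  also have "\<dots> = map (\<lambda>j. x [^] j \<otimes> a) [0..<2*n] @ [x [^] (2*n) \<otimes> a, x [^] (Suc (2*n)) \<otimes> a]"
    using Suc c1 c2 by (simp add: x_def)
  also have "\<dots> = map (\<lambda>j. x [^] j \<otimes> a) [0..<2*Suc n]" by simp
  finally show ?case by (simp add: x_def)
qed

lemma even_count_double:
  assumes "\<And>j. f (j + m) = f j"
  shows "even (count_list (map f [0..<2*m]) t)"
proof -
  have "[0..<2*m] = [0..<m] @ map (\<lambda>i. i + m) [0..<m]"
    by (simp add: map_add_upt upt_add_eq_append[of 0 m m, simplified] mult_2)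
  then have "map f [0..<2*m] = map f [0..<m] @ map f [0..<m]" using assms by simp
  then show ?thesis by simp
qed

lemma rl_relator_even:
  assumes a: "a \<in> carrier G" "a \<otimes> a = \<one>" and b: "b \<in> carrier G" "b \<otimes> b = \<one>"
  shows "even (count_list (map h (rl G (alt a b (ord (a \<otimes> b))))) t)"
proof -
  have "(a \<otimes> b) [^] (j + ord (a \<otimes> b)) \<otimes> a = (a \<otimes> b) [^] j \<otimes> a" for j
    using a b by (simp add: nat_pow_mult[symmetric])
  then show ?thesis using even_count_double[of "\<lambda>j. h ((a \<otimes> b) [^] j \<otimes> a)"]
    by (simp add: rl_alt[OF a b] map_map o_def)
qed

end

locale cox = group G for G :: "('w,'b) monoid_scheme" (structure) +
  fixes S :: "'w set"
  assumes cs: "coxeter_system G S"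
begin

lemma S_car: "S \<subseteq> carrier G" using cs by (simp add: coxeter_system_def)
lemma S_inv: "s \<in> S \<Longrightarrow> s \<otimes> s = \<one>" using cs by (simp add: coxeter_system_def)
lemma S_inv': "s \<in> S \<Longrightarrow> inv s = s" using S_inv S_car by (auto intro: inv_equality)
lemma gen_S: "generate G S = carrier G" using cs by (simp add: coxeter_system_def)
lemma rel_S: "ws \<in> lists S \<Longrightarrow> word_prod G ws = \<one> \<Longrightarrow> cox_equiv G S ws []"
  using cs by (simp add: coxeter_system_def)

lemma lists_car: "ws \<in> lists S \<Longrightarrow> set ws \<subseteq> carrier G" using S_car by auto

definition cnt :: "'w list \<Rightarrow> 'w \<Rightarrow> nat" where "cnt ws t = count_list (rl G ws) t"

lemma relator_props:
  assumes "r \<in> cox_relators G S"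
  shows "r \<in> lists S \<and> word_prod G r = \<one> \<and> even (length r) \<and> (\<forall>h t. even (count_list (map h (rl G r)) t))"
  using assms unfolding cox_relators_def
proof (elim UnE CollectE exE conjE)
  fix s assume r: "r = [s, s]" and s: "s \<in> S"
  have sc: "s \<in> carrier G" using s S_car by auto
  have "cj G s s = s" using s sc S_inv' S_inv by (simp add: cj_def)
  then show ?thesis using r s S_inv S_car by auto
next
  fix a b assume r: "r = concat (replicate (group.ord G (a \<otimes> b)) [a, b])" and ab: "a \<in> S" "b \<in> S"
  have r': "r = alt a b (ord (a \<otimes> b))" using r by (simp add: alt_def)
  have ac: "a \<in> carrier G" "b \<in> carrier G" using ab S_car by auto
  have l1: "set r \<subseteq> S" using r' alt_set[of a b] ab by blast
  have l2: "word_prod G r = \<one>" using r' wp_alt[OF ac] ac by simp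
  have l3: "length (alt a b n) = 2 * n" for n by (induction n) (auto simp: alt_Suc alt_def[symmetric], simp add: alt_def)
  show ?thesis using l1 l2 l3 r' rl_relator_even[OF ac(1) S_inv[OF ab(1)] ac(2) S_inv[OF ab(2)]]
    by auto
qed

lemma step_inv:
  assumes "cox_step G S u v" "u \<in> lists S \<or> v \<in> lists S"
  shows "u \<in> lists S \<and> v \<in> lists S \<and> (\<forall>t. even (cnt u t + cnt v t)) \<and> even (length u + length v)"
proof -
  obtain xs ys r where r: "r \<in> cox_relators G S" and u: "u = xs @ ys" and v: "v = xs @ r @ ys"
    using assms(1) unfolding cox_step_def by blast
  note R = relator_props[OF r]
  have L: "xs \<in> lists S" "ys \<in> lists S" using assms(2) u v R by auto
  have cx: "set xs \<subseteq> carrier G" "set ys \<subseteq> carrier G" "set r \<subseteq> carrier G" using L R lists_car by auto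
  have id: "map (cj G \<one>) (rl G ys) = rl G ys"
    by (rule map_idI) (use rl_closed[OF cx(2)] in auto)
  have w1: "word_prod G r = \<one>" using R by blast
  have "rl G v = rl G xs @ map (cj G (word_prod G xs)) (rl G r) @ map (cj G (word_prod G xs)) (rl G ys)"
    using cx by (simp add: v rl_append w1 id wp_append del: map_map)
  moreover have "rl G u = rl G xs @ map (cj G (word_prod G xs)) (rl G ys)"
    using cx by (simp add: u rl_append)
  ultimately have "cnt v t = cnt u t + count_list (map (cj G (word_prod G xs)) (rl G r)) t" for t
    by (simp add: cnt_def)
  then show ?thesis using L R u v by auto
qed

lemma equiv_inv:
  assumes "cox_equiv G S u v" "u \<in> lists S"
  shows "v \<in> lists S \<and> (\<forall>t. even (cnt u t + cnt v t)) \<and> even (length u + length v)"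
  using assms unfolding cox_equiv_def
proof (induction rule: rtranclp_induct)
  case base then show ?case by auto
next
  case (step y z)
  then have y: "y \<in> lists S" "\<forall>t. even (cnt u t + cnt y t)" "even (length u + length y)" by auto
  have "y \<in> lists S \<and> z \<in> lists S \<and> (\<forall>t. even (cnt y t + cnt z t)) \<and> even (length y + length z)"
    using step(2) y(1) step_inv[of y z] step_inv[of z y] by (auto simp: add.commute)
  then show ?case using y by (auto simp: add.commute)
qed

lemma wd:
  assumes ws: "ws \<in> lists S" and vs: "vs \<in> lists S" and eq: "word_prod G ws = word_prod G vs"
  shows "even (cnt ws t + cnt vs t)" and "even (length ws + length vs)"
proof -
  have cw: "set ws \<subseteq> carrier G" "set vs \<subseteq> carrier G" using ws vs lists_car by auto
  have inv_vs: "\<forall>q\<in>set vs. q \<otimes> q = \<one>" using vs S_inv by auto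
  let ?X = "ws @ rev vs"
  have X: "?X \<in> lists S" using ws vs by auto
  have "word_prod G ?X = \<one>" using cw eq inv_vs by (simp add: wp_append wp_rev)
  then have E: "cox_equiv G S ?X []" using rel_S X by simp
  from equiv_inv[OF E X] have e: "\<forall>t. even (cnt ?X t)" "even (length ?X)" by (auto simp: cnt_def)
  have id: "map (cj G (word_prod G vs)) (map (cj G (inv (word_prod G vs))) (rl G vs)) = rl G vs"
    using rl_closed[OF cw(2)] cw by (auto simp: cj_cj intro!: map_idI)
  have "cnt ?X t = cnt ws t + cnt vs t"
    using cw inv_vs eq id by (simp add: cnt_def rl_append rl_rev rev_map[symmetric])
  then show "even (cnt ws t + cnt vs t)" using e by metis
  show "even (length ws + length vs)" using e by simp
qed


lemma word_ex_gen:
  assumes T: "T \<subseteq> S" and x: "x \<in> generate G T"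
  shows "\<exists>ws\<in>lists T. word_prod G ws = x"
  using x
proof (induction rule: generate.induct)
  case one then show ?case by (intro bexI[of _ "[]"]) auto
next
  case (incl h) then show ?case using T S_car by (intro bexI[of _ "[h]"]) auto
next
  case (inv h)
  then have "h \<in> carrier G" "inv h = h" using T S_car S_inv' by auto
  then show ?case using inv T by (intro bexI[of _ "[h]"]) auto
next
  case (eng h1 h2)
  then obtain w1 w2 where "w1 \<in> lists T" "w2 \<in> lists T" "word_prod G w1 = h1" "word_prod G w2 = h2" by blast
  moreover have "set w1 \<subseteq> carrier G" "set w2 \<subseteq> carrier G" using calculation T S_car by auto
  ultimately show ?case by (intro bexI[of _ "w1 @ w2"]) (auto simp: wp_append)
qed

lemma word_ex: "x \<in> carrier G \<Longrightarrow> \<exists>ws\<in>lists S. word_prod G ws = x"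
proof -
  assume "x \<in> carrier G"
  then have "x \<in> generate G S" using gen_S by simp
  then show ?thesis using word_ex_gen[of S x] by simp
qed

abbreviation len :: "'w \<Rightarrow> nat" where "len x \<equiv> cox_length G S x"

lemma len_le: "ws \<in> lists S \<Longrightarrow> len (word_prod G ws) \<le> length ws"
proof -
  assume ws: "ws \<in> lists S"
  let ?P = "\<lambda>n. \<exists>vs\<in>lists S. length vs = n \<and> word_prod G vs = word_prod G ws"
  have "?P (length ws)" using ws by blast
  then have "Least ?P \<le> length ws" by (rule Least_le)
  then show ?thesis by (simp add: cox_length_def)
qed

lemma red_ex: "x \<in> carrier G \<Longrightarrow> \<exists>ws\<in>lists S. length ws = len x \<and> word_prod G ws = x"
proof -
  assume x: "x \<in> carrier G"
  let ?P = "\<lambda>n. \<exists>vs\<in>lists S. length vs = n \<and> word_prod G vs = x"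
  obtain ws where "ws \<in> lists S" "word_prod G ws = x" using word_ex[OF x] by blast
  then have "\<exists>n. ?P n" by blast
  then have "?P (Least ?P)" by (rule LeastI_ex)
  then show ?thesis by (simp add: cox_length_def)
qed

lemma del_lemma:
  "ws \<in> lists S \<Longrightarrow> r \<in> set (rl G ws) \<Longrightarrow>
    \<exists>vs\<in>lists S. Suc (length vs) = length ws \<and> r \<otimes> word_prod G ws = word_prod G vs"
proof (induction ws arbitrary: r)
  case Nil then show ?case by simp
next
  case (Cons q ws)
  have q: "q \<in> carrier G" "q \<otimes> q = \<one>" "inv q = q" "q \<in> S" using Cons.prems S_car S_inv S_inv' by auto
  have wc: "set ws \<subseteq> carrier G" using Cons.prems lists_car by auto
  from Cons.prems(2) consider "r = q" | r' where "r' \<in> set (rl G ws)" "r = cj G q r'" by auto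
  then show ?case
  proof cases
    case 1
    have "r \<otimes> word_prod G (q#ws) = word_prod G ws" using 1 q wc by (simp add: m_assoc[symmetric])
    then show ?thesis using Cons.prems by (intro bexI[of _ ws]) auto
  next
    case 2
    obtain vs where vs: "vs \<in> lists S" "Suc (length vs) = length ws" "r' \<otimes> word_prod G ws = word_prod G vs"
      using Cons.IH[OF _ 2(1)] Cons.prems by auto
    have rc: "r' \<in> carrier G" using 2 rl_closed[OF wc] by auto
    have "r \<otimes> word_prod G (q#ws) = q \<otimes> (r' \<otimes> word_prod G ws)"
      using 2 q wc rc by (simp add: cj_def m_assoc) (simp add: m_assoc[symmetric])
    then show ?thesis using vs q by (intro bexI[of _ "q#vs"]) auto
  qed
qed

definition red :: "'w list \<Rightarrow> bool" where
  "red ws \<longleftrightarrow> ws \<in> lists S \<and> length ws = len (word_prod G ws)"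

lemma red_Cons: assumes "red (q#ws)" shows "red ws"
proof -
  have A: "q # ws \<in> lists S" "length (q#ws) = len (word_prod G (q#ws))" using assms unfolding red_def by blast+
  have ws: "ws \<in> lists S" "q \<in> S" using A(1) by auto
  have le: "len (word_prod G ws) \<le> length ws" using len_le[OF ws(1)] .
  have "\<not> len (word_prod G ws) < length ws"
  proof
    assume lt: "len (word_prod G ws) < length ws"
    have wc: "word_prod G ws \<in> carrier G" using wp_closed lists_car[OF ws(1)] by blast
    obtain vs where vs: "vs \<in> lists S" "length vs = len (word_prod G ws)" "word_prod G vs = word_prod G ws"
      using red_ex[OF wc] by blast
    have qvs: "q # vs \<in> lists S" using vs(1) ws(2) by simp
    have "len (word_prod G (q#vs)) \<le> length (q#vs)" using len_le[OF qvs] .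
    moreover have "word_prod G (q#vs) = word_prod G (q#ws)" using vs(3) by simp
    ultimately have "length (q#ws) \<le> length (q#vs)" using A(2) by simp
    then show False using vs(2) lt by simp
  qed
  then have "length ws = len (word_prod G ws)" using le by linarith
  then show ?thesis using ws(1) unfolding red_def by blast
qed

lemma cj_cj_self: "r \<in> S \<Longrightarrow> t \<in> carrier G \<Longrightarrow> cj G r (cj G r t) = t"
proof -
  assume "r \<in> S" "t \<in> carrier G"
  moreover have "r \<in> carrier G" using S_car \<open>r \<in> S\<close> by auto
  ultimately show ?thesis by (simp add: cj_cj S_inv)
qed

lemma cj_inj: "r \<in> S \<Longrightarrow> inj_on (cj G r) (carrier G)"
  by (metis cj_cj_self inj_onI)

lemma red_distinct: "red ws \<Longrightarrow> distinct (rl G ws)"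
proof (induction ws)
  case Nil then show ?case by simp
next
  case (Cons q ws)
  have r: "red ws" using red_Cons Cons.prems by blast
  have q: "q \<in> S" "q \<in> carrier G" "ws \<in> lists S" using Cons.prems S_car by (auto simp: red_def)
  have wc: "set (rl G ws) \<subseteq> carrier G" using rl_closed lists_car q by auto
  have d1: "distinct (map (cj G q) (rl G ws))"
    using Cons.IH[OF r] cj_inj[OF q(1)] wc by (simp add: distinct_map inj_on_subset)
  have "q \<notin> set (map (cj G q) (rl G ws))"
  proof
    assume "q \<in> set (map (cj G q) (rl G ws))"
    then obtain r' where r': "r' \<in> set (rl G ws)" "q = cj G q r'" by auto
    then have "r' = q" using cj_cj_self[OF q(1), of r'] wc q cj_cj_self[OF q(1), of q]
      by (metis S_inv' cj_def inv_solve_right' m_closed q(1) q(2) subsetD)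
    then obtain vs where vs: "vs \<in> lists S" "Suc (length vs) = length ws" "q \<otimes> word_prod G ws = word_prod G vs"
      using del_lemma[OF q(3)] r' by blast
    have "len (word_prod G vs) \<le> length vs" using len_le vs by blast
    then show False using Cons.prems vs by (simp add: red_def)
  qed
  then show ?case using d1 by simp
qed

definition rw :: "'w \<Rightarrow> 'w list" where
  "rw x = (SOME ws. ws \<in> lists S \<and> length ws = len x \<and> word_prod G ws = x)"

lemma rw: "x \<in> carrier G \<Longrightarrow> rw x \<in> lists S \<and> length (rw x) = len x \<and> word_prod G (rw x) = x"
proof -
  assume "x \<in> carrier G"
  then have "\<exists>ws. ws \<in> lists S \<and> length ws = len x \<and> word_prod G ws = x" using red_ex by blast
  then show ?thesis unfolding rw_def by (rule someI_ex)
qed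

lemma rw_red: "x \<in> carrier G \<Longrightarrow> red (rw x)"
  using rw by (simp add: red_def)

definition Nw :: "'w \<Rightarrow> 'w set" where "Nw x = set (rl G (rw x))"

lemma count_distinct: "distinct xs \<Longrightarrow> count_list xs t = (if t \<in> set xs then 1 else 0)"
  by (induction xs) auto

lemma Nw_char:
  assumes ws: "ws \<in> lists S" and x: "word_prod G ws = x"
  shows "t \<in> Nw x \<longleftrightarrow> odd (cnt ws t)"
proof -
  have xc: "x \<in> carrier G" using x ws lists_car wp_closed by metis
  have e: "even (cnt (rw x) t + cnt ws t)" using wd(1)[of "rw x" ws t] rw[OF xc] ws x by auto
  have "cnt (rw x) t = (if t \<in> Nw x then 1 else 0)"
    using count_distinct[OF red_distinct[OF rw_red[OF xc]]] by (simp add: cnt_def Nw_def)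
  then show ?thesis using e by (cases "t \<in> Nw x") auto
qed

lemma card_Nw: "x \<in> carrier G \<Longrightarrow> card (Nw x) = len x"
  using distinct_card[OF red_distinct[OF rw_red]] rw by (simp add: Nw_def)

lemma finite_Nw: "finite (Nw x)" by (simp add: Nw_def)

lemma Nw_car: "x \<in> carrier G \<Longrightarrow> Nw x \<subseteq> carrier G"
  using rw rl_closed lists_car by (simp add: Nw_def)


lemma NR:
  assumes x: "x \<in> carrier G" and r: "r \<in> S"
  shows "t \<in> Nw (x \<otimes> r) \<longleftrightarrow> (t \<in> Nw x) \<noteq> (t = cj G x r)"
proof -
  have R: "rw x \<in> lists S" "word_prod G (rw x) = x" using rw[OF x] by auto
  have rc: "r \<in> carrier G" using r S_car by auto
  have L: "rw x @ [r] \<in> lists S" "word_prod G (rw x @ [r]) = x \<otimes> r"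
    using R r rc lists_car[OF R(1)] by (auto simp: wp_append)
  have "cnt (rw x @ [r]) t = cnt (rw x) t + (if cj G x r = t then 1 else 0)"
    using R rc lists_car[OF R(1)] by (simp add: cnt_def rl_append)
  then show ?thesis using Nw_char[OF L] Nw_char[OF R] by auto
qed

lemma count_map_inj:
  "inj_on f A \<Longrightarrow> set L \<subseteq> A \<Longrightarrow> u \<in> A \<Longrightarrow> count_list (map f L) (f u) = count_list L u"
  by (induction L) (auto dest: inj_onD)

lemma NL:
  assumes x: "x \<in> carrier G" and r: "r \<in> S"
  shows "t \<in> Nw (r \<otimes> x) \<longleftrightarrow> (t = r) \<noteq> (t \<in> carrier G \<and> cj G r t \<in> Nw x)"
proof -
  have R: "rw x \<in> lists S" "word_prod G (rw x) = x" using rw[OF x] by auto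
  have rc: "r \<in> carrier G" using r S_car by auto
  have L: "r # rw x \<in> lists S" "word_prod G (r # rw x) = r \<otimes> x"
    using R r by auto
  have lc: "set (rl G (rw x)) \<subseteq> carrier G" using rl_closed lists_car[OF R(1)] by auto
  have c: "count_list (map (cj G r) (rl G (rw x))) t = (if t \<in> carrier G then cnt (rw x) (cj G r t) else 0)"
  proof (cases "t \<in> carrier G")
    case True
    have "count_list (map (cj G r) (rl G (rw x))) (cj G r (cj G r t)) = cnt (rw x) (cj G r t)"
      using count_map_inj[OF cj_inj[OF r] lc] True rc by (simp add: cnt_def)
    then show ?thesis using True cj_cj_self[OF r True] by simp
  next
    case False
    have "t \<notin> set (map (cj G r) (rl G (rw x)))" using False lc rc by auto
    then show ?thesis using False by simp
  qed
  have "cnt (r # rw x) t = (if r = t then 1 else 0) + count_list (map (cj G r) (rl G (rw x))) t"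
    by (simp add: cnt_def)
  then show ?thesis using Nw_char[OF L] Nw_char[OF R] c rc by auto
qed

lemma lenR:
  assumes x: "x \<in> carrier G" and r: "r \<in> S"
  shows "(cj G x r \<in> Nw x \<longrightarrow> Suc (len (x \<otimes> r)) = len x) \<and> (cj G x r \<notin> Nw x \<longrightarrow> len (x \<otimes> r) = Suc (len x))"
proof -
  have rc: "r \<in> carrier G" using r S_car by auto
  have xr: "x \<otimes> r \<in> carrier G" using x rc by auto
  let ?c = "cj G x r"
  have E: "Nw (x \<otimes> r) = (if ?c \<in> Nw x then Nw x - {?c} else insert ?c (Nw x))"
    using NR[OF x r] by auto
  show ?thesis
  proof (cases "?c \<in> Nw x")
    case True
    then have "card (Nw (x \<otimes> r)) = card (Nw x) - 1" using E finite_Nw by simp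
    moreover have "card (Nw x) > 0" using True finite_Nw card_gt_0_iff by blast
    ultimately show ?thesis using True card_Nw[OF x] card_Nw[OF xr] by simp
  next
    case False
    then have "card (Nw (x \<otimes> r)) = Suc (card (Nw x))" using E finite_Nw by simp
    then show ?thesis using False card_Nw[OF x] card_Nw[OF xr] by simp
  qed
qed

lemma lenL:
  assumes x: "x \<in> carrier G" and r: "r \<in> S"
  shows "(r \<in> Nw x \<longrightarrow> Suc (len (r \<otimes> x)) = len x) \<and> (r \<notin> Nw x \<longrightarrow> len (r \<otimes> x) = Suc (len x))"
proof -
  have rc: "r \<in> carrier G" using r S_car by auto
  have rx: "r \<otimes> x \<in> carrier G" using x rc by auto
  let ?B = "cj G r ` Nw x"
  have B: "t \<in> ?B \<longleftrightarrow> t \<in> carrier G \<and> cj G r t \<in> Nw x" for t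
  proof
    assume "t \<in> ?B"
    then obtain u where u: "u \<in> Nw x" "t = cj G r u" by blast
    have "u \<in> carrier G" using u Nw_car[OF x] by blast
    then show "t \<in> carrier G \<and> cj G r t \<in> Nw x" using u cj_cj_self[OF r] rc by simp
  next
    assume t: "t \<in> carrier G \<and> cj G r t \<in> Nw x"
    then have "t = cj G r (cj G r t)" using cj_cj_self[OF r] by simp
    then show "t \<in> ?B" using t by blast
  qed
  have rB: "r \<in> ?B \<longleftrightarrow> r \<in> Nw x" using B rc cj_cj_self[OF r] by (simp add: cj_def S_inv' r m_assoc S_inv)
  have cB: "card ?B = card (Nw x)"
    using card_image[OF inj_on_subset[OF cj_inj[OF r] Nw_car[OF x]]] .
  have E: "Nw (r \<otimes> x) = (if r \<in> ?B then ?B - {r} else insert r ?B)"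
  proof (rule Set.set_eqI)
    fix t
    have "t \<in> Nw (r \<otimes> x) \<longleftrightarrow> (t = r) \<noteq> (t \<in> ?B)" using NL[OF x r, of t] B[of t] by simp
    then show "t \<in> Nw (r \<otimes> x) \<longleftrightarrow> t \<in> (if r \<in> ?B then ?B - {r} else insert r ?B)"
      by (cases "r \<in> ?B") auto
  qed
  have fB: "finite ?B" using finite_Nw by simp
  show ?thesis
  proof (cases "r \<in> Nw x")
    case True
    then have "card (Nw (r \<otimes> x)) = card (Nw x) - 1" using E rB fB cB by simp
    moreover have "card (Nw x) > 0" using True finite_Nw card_gt_0_iff by blast
    ultimately show ?thesis using True card_Nw[OF x] card_Nw[OF rx] by simp
  next
    case False
    then have "card (Nw (r \<otimes> x)) = Suc (card (Nw x))" using E rB fB cB by simp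
    then show ?thesis using False card_Nw[OF x] card_Nw[OF rx] by simp
  qed
qed


lemma len_inv_le: "x \<in> carrier G \<Longrightarrow> len (inv x) \<le> len x"
proof -
  assume x: "x \<in> carrier G"
  have R: "rw x \<in> lists S" "length (rw x) = len x" "word_prod G (rw x) = x" using rw[OF x] by auto
  have "word_prod G (rev (rw x)) = inv x" using R lists_car[OF R(1)] S_inv by (auto simp: wp_rev)
  moreover have "rev (rw x) \<in> lists S" using R by auto
  ultimately show ?thesis using len_le[of "rev (rw x)"] R by auto
qed

lemma len_inv: "x \<in> carrier G \<Longrightarrow> len (inv x) = len x"
  using len_inv_le[of x] len_inv_le[of "inv x"] by simp

lemma len_theta:
  assumes J: "J \<subseteq> S"
    and th_into: "\<And>a. a \<in> generate G J \<Longrightarrow> \<theta> a \<in> generate G J"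
    and th_hom: "\<And>a b. a \<in> generate G J \<Longrightarrow> b \<in> generate G J \<Longrightarrow> \<theta> (a \<otimes> b) = \<theta> a \<otimes> \<theta> b"
    and th_inj: "inj_on \<theta> (generate G J)"
    and th_J: "\<And>a. a \<in> J \<Longrightarrow> \<theta> a \<in> J"
    and x: "x \<in> generate G J"
  shows "len (\<theta> x) = len x"
proof -
  let ?P = "generate G J"
  have Jc: "J \<subseteq> carrier G" using J S_car by auto
  have Pc: "?P \<subseteq> carrier G" using generate_in_carrier[OF Jc] by auto
  have th1: "\<theta> \<one> = \<one>"
  proof -
    have "\<theta> \<one> = \<theta> \<one> \<otimes> \<theta> \<one>" using th_hom[OF generate.one generate.one] by simp
    moreover have "\<theta> \<one> \<in> carrier G" using th_into[OF generate.one] Pc by auto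
    ultimately show ?thesis by (metis l_cancel_one' one_closed)
  qed
  obtain ws where ws: "ws \<in> lists J" "word_prod G ws = x" using word_ex_gen[OF J x] by blast
  have wsP: "\<And>ws. ws \<in> lists J \<Longrightarrow> word_prod G ws \<in> ?P"
  proof -
    fix ws :: "'w list" show "ws \<in> lists J \<Longrightarrow> word_prod G ws \<in> ?P"
      by (induction ws) (auto intro: generate.intros)
  qed
  have wm: "\<And>ws. ws \<in> lists J \<Longrightarrow> word_prod G (map \<theta> ws) = \<theta> (word_prod G ws)"
  proof -
    fix ws :: "'w list" show "ws \<in> lists J \<Longrightarrow> word_prod G (map \<theta> ws) = \<theta> (word_prod G ws)"
      by (induction ws) (auto simp: th1 th_hom wsP generate.incl)
  qed
  have cjJ: "\<And>q r. q \<in> J \<Longrightarrow> r \<in> ?P \<Longrightarrow> cj G q r = q \<otimes> r \<otimes> q"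
    using J S_inv' by (simp add: cj_def subsetD)
  have rlP: "\<And>ws. ws \<in> lists J \<Longrightarrow> set (rl G ws) \<subseteq> ?P"
  proof -
    fix ws :: "'w list" show "ws \<in> lists J \<Longrightarrow> set (rl G ws) \<subseteq> ?P"
    proof (induction ws)
      case Nil then show ?case by simp
    next
      case (Cons q ws)
      have qP: "q \<in> ?P" using Cons.prems by (auto intro: generate.incl)
      have "cj G q r \<in> ?P" if r: "r \<in> ?P" for r
      proof -
        have "q \<otimes> r \<otimes> q \<in> ?P" using qP r by (intro generate.eng)
        then show ?thesis using cjJ[OF _ r] Cons.prems by simp
      qed
      then show ?case using Cons qP by auto
    qed
  qed
  have rm: "\<And>ws. ws \<in> lists J \<Longrightarrow> rl G (map \<theta> ws) = map \<theta> (rl G ws)"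
  proof -
    fix ws :: "'w list" show "ws \<in> lists J \<Longrightarrow> rl G (map \<theta> ws) = map \<theta> (rl G ws)"
    proof (induction ws)
      case Nil then show ?case by simp
    next
      case (Cons q ws)
      have q: "q \<in> J" "\<theta> q \<in> J" "ws \<in> lists J" using Cons.prems th_J by auto
      have "\<And>r. r \<in> set (rl G ws) \<Longrightarrow> cj G (\<theta> q) (\<theta> r) = \<theta> (cj G q r)"
      proof -
        fix r assume "r \<in> set (rl G ws)"
        then have r: "r \<in> ?P" using rlP[OF q(3)] by auto
        have qP: "q \<in> ?P" using q by (auto intro: generate.incl)
        show "cj G (\<theta> q) (\<theta> r) = \<theta> (cj G q r)"
          using cjJ[OF q(1) r] cjJ[OF q(2) th_into[OF r]] th_hom qP r
          by (simp add: generate.eng)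
      qed
      then show ?case using Cons by simp
    qed
  qed
  have mJ: "map \<theta> ws \<in> lists J" using ws(1) th_J by auto
  have wsS: "ws \<in> lists S" "map \<theta> ws \<in> lists S" using ws(1) mJ lists_mono[OF J] by blast+
  have wt: "word_prod G (map \<theta> ws) = \<theta> x" using wm ws by simp
  have NwP: "Nw x \<subseteq> ?P"
  proof
    fix t assume "t \<in> Nw x"
    then have "odd (cnt ws t)" using Nw_char[OF wsS(1) ws(2)] by simp
    then have "t \<in> set (rl G ws)" by (metis cnt_def count_notin even_zero)
    then show "t \<in> ?P" using rlP[OF ws(1)] by auto
  qed
  have E: "Nw (\<theta> x) = \<theta> ` Nw x"
  proof (intro Set.set_eqI iffI)
    fix t assume t: "t \<in> Nw (\<theta> x)"
    then have "odd (count_list (map \<theta> (rl G ws)) t)" using Nw_char[OF wsS(2) wt] rm[OF ws(1)] by (simp add: cnt_def)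
    then have "t \<in> set (map \<theta> (rl G ws))" by (metis count_notin even_zero)
    then obtain u where u: "u \<in> set (rl G ws)" "t = \<theta> u" by auto
    have "count_list (map \<theta> (rl G ws)) t = cnt ws u"
      using count_map_inj[OF th_inj rlP[OF ws(1)]] u rlP[OF ws(1)] by (auto simp: cnt_def)
    then have "u \<in> Nw x" using Nw_char[OF wsS(1) ws(2)] \<open>odd (count_list (map \<theta> (rl G ws)) t)\<close> by simp
    then show "t \<in> \<theta> ` Nw x" using u by auto
  next
    fix t assume "t \<in> \<theta> ` Nw x"
    then obtain u where u: "u \<in> Nw x" "t = \<theta> u" by auto
    have "count_list (map \<theta> (rl G ws)) t = cnt ws u"
      using count_map_inj[OF th_inj rlP[OF ws(1)]] u NwP by (auto simp: cnt_def)
    then show "t \<in> Nw (\<theta> x)" using Nw_char[OF wsS(1) ws(2)] Nw_char[OF wsS(2) wt] rm[OF ws(1)] u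
      by (simp add: cnt_def)
  qed
  have xc: "x \<in> carrier G" "\<theta> x \<in> carrier G" using x th_into[OF x] Pc by auto
  have "card (\<theta> ` Nw x) = card (Nw x)" using card_image[OF inj_on_subset[OF th_inj NwP]] .
  then show ?thesis using E card_Nw[OF xc(1)] card_Nw[OF xc(2)] by simp
qed


lemma cj_alg:
  assumes y: "y \<in> carrier G" and t': "t' \<in> S" and e: "cj G y t' = t"
  shows "t \<otimes> y \<otimes> t' = y"
proof -
  have tc: "t' \<in> carrier G" using t' S_car by auto
  have "t \<otimes> y \<otimes> t' = y \<otimes> t' \<otimes> inv y \<otimes> y \<otimes> t'" using e by (simp add: cj_def)
  also have "\<dots> = y \<otimes> (t' \<otimes> t')" using y tc by (simp add: m_assoc)
  also have "\<dots> = y" using S_inv[OF t'] y by simp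
  finally show ?thesis .
qed

lemma deodhar:
  assumes w: "w \<in> carrier G" and s: "s \<in> S" and r: "r \<in> S"
    and wr: "len w < len (w \<otimes> r)" and swr: "len (s \<otimes> w \<otimes> r) \<le> len (s \<otimes> w)"
  shows "inv w \<otimes> s \<otimes> w = r"
proof -
  have sc: "s \<in> carrier G" and rc: "r \<in> carrier G" using s r S_car by auto
  let ?y = "s \<otimes> w"
  have yc: "?y \<in> carrier G" using sc w by auto
  have cN: "cj G ?y r \<in> Nw ?y" using lenR[OF yc r] swr by auto
  have sN: "s \<notin> Nw w"
  proof
    assume "s \<in> Nw w"
    then have a: "Suc (len ?y) = len w" using lenL[OF w s] by simp
    have yrc: "?y \<otimes> r \<in> carrier G" using yc rc by auto
    have b: "len (s \<otimes> (?y \<otimes> r)) \<le> Suc (len (?y \<otimes> r))" using lenL[OF yrc s] by auto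
    have "s \<otimes> (?y \<otimes> r) = w \<otimes> r" using sc w rc S_inv[OF s] by (simp add: m_assoc[symmetric])
    then show False using a b wr swr by simp
  qed
  have "cj G s (cj G ?y r) = cj G w r" using sc w rc S_inv[OF s] by (simp add: cj_cj m_assoc[symmetric])
  then have alt: "cj G ?y r = s \<or> cj G w r \<in> Nw w" using NL[OF w s, of "cj G ?y r"] cN by auto
  show ?thesis
  proof (cases "cj G ?y r = s")
    case True
    have "cj G w r = cj G s s" using \<open>cj G s (cj G ?y r) = cj G w r\<close> True by simp
    also have "\<dots> = s" using sc S_inv'[OF s] S_inv[OF s] by (simp add: cj_def)
    finally have "w \<otimes> r \<otimes> inv w = s" by (simp add: cj_def)
    then have "inv w \<otimes> s \<otimes> w = inv w \<otimes> (w \<otimes> r \<otimes> inv w) \<otimes> w" by simp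
    also have "\<dots> = r" using w rc by (simp add: m_assoc[symmetric]) (simp add: m_assoc)
    finally show ?thesis .
  next
    case False
    then have "cj G w r \<in> Nw w" using alt by simp
    then show ?thesis using lenR[OF w r] wr by simp
  qed
qed

lemma twisted:
  assumes y: "y \<in> carrier G" and t: "t \<in> S" and t': "t' \<in> S"
    and eqlen: "len (y \<otimes> t') = len (t \<otimes> y)" and same: "len (t \<otimes> y \<otimes> t') = len y"
  shows "t \<otimes> y \<otimes> t' = y"
proof -
  have tc: "t \<in> carrier G" and t'c: "t' \<in> carrier G" using t t' S_car by auto
  have tyc: "t \<otimes> y \<in> carrier G" and yt: "y \<otimes> t' \<in> carrier G" using tc t'c y by auto
  show ?thesis
  proof (cases "t \<in> Nw y")
    case False
    then have l1: "len (t \<otimes> y) = Suc (len y)" using lenL[OF y t] by simp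
    have cN: "cj G (t \<otimes> y) t' \<in> Nw (t \<otimes> y)" using lenR[OF tyc t'] l1 same by auto
    have cc: "cj G t (cj G (t \<otimes> y) t') = cj G y t'"
      using tc y t'c S_inv[OF t] by (simp add: cj_cj m_assoc[symmetric])
    show ?thesis
    proof (cases "cj G (t \<otimes> y) t' = t")
      case True
      have "cj G y t' = cj G t t" using cc True by simp
      also have "\<dots> = t" using tc S_inv'[OF t] S_inv[OF t] by (simp add: cj_def)
      finally show ?thesis using cj_alg[OF y t'] by simp
    next
      case False
      then have "cj G y t' \<in> Nw y" using NL[OF y t, of "cj G (t \<otimes> y) t'"] cN cc by auto
      then have "Suc (len (y \<otimes> t')) = len y" using lenR[OF y t'] by simp
      then show ?thesis using eqlen l1 by simp
    qed
  next
    case True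
    then have l1: "Suc (len (t \<otimes> y)) = len y" using lenL[OF y t] by simp
    have cN: "cj G y t' \<in> Nw y" using lenR[OF y t'] l1 eqlen by auto
    then have l2: "Suc (len (y \<otimes> t')) = len y" using lenR[OF y t'] by simp
    have "t \<otimes> (y \<otimes> t') = t \<otimes> y \<otimes> t'" using tc y t'c by (simp add: m_assoc)
    then have "t \<notin> Nw (y \<otimes> t')" using lenL[OF yt t] l2 same by auto
    then have "t = cj G y t'" using NR[OF y t', of t] True by auto
    then show ?thesis using cj_alg[OF y t'] by simp
  qed
qed


lemma main_cox:
  assumes "J \<subseteq> S" and "s \<in> S" and "\<tau> \<in> KJ G S J"
  shows "ht G S J (simple_act G S J s \<tau>) = ht G S J \<tau> \<longleftrightarrow> simple_act G S J s \<tau> = \<tau>"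
proof
  assume H: "ht G S J (simple_act G S J s \<tau>) = ht G S J \<tau>"
  note J = assms(1) and s = assms(2)
  let ?P = "generate G J"
  have Jc: "J \<subseteq> carrier G" using J S_car by auto
  have Pc: "?P \<subseteq> carrier G" using generate_in_carrier[OF Jc] by auto
  have sc: "s \<in> carrier G" using s S_car by auto
  obtain w y \<theta> where tau: "\<tau> = (w, (y, \<theta>))" by (metis prod.exhaust)
  have w: "w \<in> min_coset_reps G S J" and z: "(y, \<theta>) \<in> perfect_involutions G J"
    using assms(3) unfolding tau KJ_def by blast+
  have wc: "w \<in> carrier G" using w by (simp add: min_coset_reps_def)
  have zmem: "(y, \<theta>) \<in> plus_carrier G J" and zz: "plus_mult G J (y, \<theta>) (y, \<theta>) = plus_one G J"
    using z unfolding perfect_involutions_def mem_Collect_eq by blast+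
  have yP: "y \<in> ?P" and thD: "\<theta> \<in> diagram_auts G J"
    using zmem unfolding plus_carrier_def parabolic_def by blast+
  have th_iso: "\<theta> \<in> iso (G\<lparr>carrier := ?P\<rparr>) (G\<lparr>carrier := ?P\<rparr>)"
    and th_ext: "\<theta> \<in> extensional ?P" and th_J: "\<theta> ` J = J"
    using thD unfolding diagram_auts_def parabolic_def mem_Collect_eq by blast+
  have hom: "\<theta> \<in> hom (G\<lparr>carrier := ?P\<rparr>) (G\<lparr>carrier := ?P\<rparr>)"
    and bij: "bij_betw \<theta> ?P ?P"
    using th_iso unfolding iso_def mem_Collect_eq by simp_all
  have hom': "\<theta> \<in> ?P \<rightarrow> ?P" "\<forall>a\<in>?P. \<forall>b\<in>?P. \<theta> (a \<otimes> b) = \<theta> a \<otimes> \<theta> b"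
    using hom unfolding hom_def mem_Collect_eq by simp_all
  have th_into: "\<And>a. a \<in> ?P \<Longrightarrow> \<theta> a \<in> ?P" using hom'(1) by (rule funcset_mem)
  have th_hom: "\<And>a b. a \<in> ?P \<Longrightarrow> b \<in> ?P \<Longrightarrow> \<theta> (a \<otimes> b) = \<theta> a \<otimes> \<theta> b"
    using hom'(2) by blast
  have th_inj: "inj_on \<theta> ?P" using bij by (rule bij_betw_imp_inj_on)
  have th_J': "\<And>a. a \<in> J \<Longrightarrow> \<theta> a \<in> J" using th_J by auto
  have th1: "\<theta> \<one> = \<one>"
  proof -
    have "\<theta> \<one> = \<theta> \<one> \<otimes> \<theta> \<one>" using th_hom[OF generate.one generate.one] by simp
    moreover have "\<theta> \<one> \<in> carrier G" using th_into[OF generate.one] Pc by auto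
    ultimately show ?thesis by (metis l_cancel_one' one_closed)
  qed
  have th_inv: "\<And>a. a \<in> ?P \<Longrightarrow> \<theta> (inv a) = inv (\<theta> a)"
  proof -
    fix a assume a: "a \<in> ?P"
    have ia: "inv a \<in> ?P" using subgroup.m_inv_closed[OF generate_is_subgroup[OF Jc] a] .
    have ac: "a \<in> carrier G" using a Pc by blast
    have "\<theta> (inv a) \<otimes> \<theta> a = \<theta> (inv a \<otimes> a)" using th_hom[OF ia a] by simp
    also have "\<dots> = \<one>" using ac th1 by simp
    finally have "\<theta> (inv a) \<otimes> \<theta> a = \<one>" .
    moreover have "\<theta> a \<in> carrier G" "\<theta> (inv a) \<in> carrier G" using th_into[OF a] th_into[OF ia] Pc by auto
    ultimately show "\<theta> (inv a) = inv (\<theta> a)" by (intro inv_equality[symmetric])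
  qed
  have yc: "y \<in> carrier G" using yP Pc by auto
  have ytheta: "y \<otimes> \<theta> y = \<one>"
    using arg_cong[OF zz, of fst] by (simp add: plus_mult_def plus_one_def)
  have tyc: "\<theta> y \<in> carrier G" using th_into[OF yP] Pc by auto
  have "\<theta> y = inv y \<otimes> (y \<otimes> \<theta> y)" using yc tyc by (simp add: m_assoc[symmetric])
  also have "\<dots> = inv y" using ytheta yc by simp
  finally have thy: "\<theta> y = inv y" .
  have ext0: "\<And>a. a \<notin> ?P \<Longrightarrow> \<theta> a = undefined" using th_ext unfolding extensional_def by blast
  have comp1: "compose ?P (restrict id ?P) \<theta> = \<theta>"
  proof (rule ext)
    fix a show "compose ?P (restrict id ?P) \<theta> a = \<theta> a"
      by (cases "a \<in> ?P") (simp_all add: compose_def th_into ext0)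
  qed
  have comp2: "compose ?P \<theta> (restrict id ?P) = \<theta>"
  proof (rule ext)
    fix a show "compose ?P \<theta> (restrict id ?P) a = \<theta> a"
      by (cases "a \<in> ?P") (simp_all add: compose_def ext0)
  qed
  show "simple_act G S J s \<tau> = \<tau>"
  proof (cases "s \<otimes> w \<in> min_coset_reps G S J")
    case True
    then have sa: "simple_act G S J s \<tau> = (s \<otimes> w, (y, \<theta>))" by (simp add: simple_act_def tau)
    have H': "ht G S J (s \<otimes> w, (y, \<theta>)) = ht G S J (w, (y, \<theta>))" using H unfolding sa unfolding tau .
    have "len (s \<otimes> w) = len w" using H' by (simp add: ht_def)
    then show ?thesis using lenL[OF wc s] by (cases "s \<in> Nw w") auto
  next
    case False
    then obtain r where r: "r \<in> J" "\<not> len (s \<otimes> w) < len (s \<otimes> w \<otimes> r)"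
      using sc wc by (auto simp: min_coset_reps_def)
    have rS: "r \<in> S" using r J by auto
    have "len w < len (w \<otimes> r)" using w r by (simp add: min_coset_reps_def)
    then have tr: "inv w \<otimes> s \<otimes> w = r" using deodhar[OF wc s rS] r by simp
    define t where "t = inv w \<otimes> s \<otimes> w"
    have tJ: "t \<in> J" and tS: "t \<in> S" and tP: "t \<in> ?P" using tr r rS by (auto simp: t_def intro: generate.incl)
    have tc: "t \<in> carrier G" using tS S_car by auto
    have t'J: "\<theta> t \<in> J" using th_J' tJ by auto
    have t'S: "\<theta> t \<in> S" using t'J J by auto
    have t'c: "\<theta> t \<in> carrier G" using t'S S_car by auto
    have sa: "simple_act G S J s \<tau> = (w, (t \<otimes> y \<otimes> \<theta> t, \<theta>))"
      using False yP comp1 comp2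
      by (simp add: simple_act_def tau Let_def t_def[symmetric] plus_mult_def plus_embed_def parabolic_def)
    have tw_comp: "\<And>u v y0. u \<in> ?P \<Longrightarrow> v \<in> ?P \<Longrightarrow> y0 \<in> carrier G \<Longrightarrow>
        twisted_act G v (twisted_act G u (y0, \<theta>)) = twisted_act G (v \<otimes> u) (y0, \<theta>)"
    proof -
      fix u v y0 assume u: "u \<in> ?P" and v: "v \<in> ?P" and y0: "y0 \<in> carrier G"
      have uc: "u \<in> carrier G" "v \<in> carrier G" "\<theta> u \<in> carrier G" "\<theta> v \<in> carrier G"
        using u v th_into Pc by auto
      show "twisted_act G v (twisted_act G u (y0, \<theta>)) = twisted_act G (v \<otimes> u) (y0, \<theta>)"
        using uc y0 th_hom[OF v u] by (simp add: twisted_act_def m_assoc inv_mult_group)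
    qed
    have tinv: "inv (\<theta> t) = \<theta> t" using S_inv'[OF t'S] .
    have zeq: "(t \<otimes> y \<otimes> \<theta> t, \<theta>) = twisted_act G t (y, \<theta>)"
      using tinv by (simp add: twisted_act_def)
    have bk: "twisted_act G t (twisted_act G t (y, \<theta>)) = (y, \<theta>)"
      using tw_comp[OF tP tP yc] S_inv[OF tS] th1 yc by (simp add: twisted_act_def)
    have cls: "(\<exists>v\<in>parabolic G J. zq = twisted_act G v (t \<otimes> y \<otimes> \<theta> t, \<theta>)) \<longleftrightarrow>
               (\<exists>v\<in>parabolic G J. zq = twisted_act G v (y, \<theta>))" for zq
    proof
      assume "\<exists>v\<in>parabolic G J. zq = twisted_act G v (t \<otimes> y \<otimes> \<theta> t, \<theta>)"
      then obtain v where v: "v \<in> ?P" "zq = twisted_act G v (t \<otimes> y \<otimes> \<theta> t, \<theta>)"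
        by (auto simp: parabolic_def)
      then have "zq = twisted_act G (v \<otimes> t) (y, \<theta>)" using zeq tw_comp[OF tP v(1) yc] by simp
      moreover have "v \<otimes> t \<in> ?P" using v tP by (auto intro: generate.eng)
      ultimately show "\<exists>v\<in>parabolic G J. zq = twisted_act G v (y, \<theta>)" by (auto simp: parabolic_def)
    next
      assume "\<exists>v\<in>parabolic G J. zq = twisted_act G v (y, \<theta>)"
      then obtain v where v: "v \<in> ?P" "zq = twisted_act G v (y, \<theta>)"
        by (auto simp: parabolic_def)
      have tw1: "twisted_act G t (t \<otimes> y \<otimes> \<theta> t, \<theta>) = (y, \<theta>)" using bk zeq by simp
      have y1c: "t \<otimes> y \<otimes> \<theta> t \<in> carrier G" using tc yc t'c by simp
      have "zq = twisted_act G v (twisted_act G t (t \<otimes> y \<otimes> \<theta> t, \<theta>))" using v tw1 by simp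
      also have "\<dots> = twisted_act G (v \<otimes> t) (t \<otimes> y \<otimes> \<theta> t, \<theta>)"
        using tw_comp[OF tP v(1) y1c] .
      finally have "zq = twisted_act G (v \<otimes> t) (t \<otimes> y \<otimes> \<theta> t, \<theta>)" .
      moreover have "v \<otimes> t \<in> ?P" using v tP by (auto intro: generate.eng)
      ultimately show "\<exists>v\<in>parabolic G J. zq = twisted_act G v (t \<otimes> y \<otimes> \<theta> t, \<theta>)"
        by (auto simp: parabolic_def)
    qed
    have mc: "min_conj G S J (t \<otimes> y \<otimes> \<theta> t, \<theta>) = min_conj G S J (y, \<theta>)"
      unfolding min_conj_def using cls by simp
    have same: "len (t \<otimes> y \<otimes> \<theta> t) = len y"
    proof -
      have H': "ht G S J (w, (t \<otimes> y \<otimes> \<theta> t, \<theta>)) = ht G S J (w, (y, \<theta>))"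
        using H unfolding sa unfolding tau .
      then show ?thesis using mc by (simp add: ht_def plus_length_def)
    qed
    have iy: "inv y \<in> ?P" using subgroup.m_inv_closed[OF generate_is_subgroup[OF Jc] yP] .
    have iyt: "inv y \<otimes> t \<in> ?P" using iy tP by (rule generate.eng)
    have "len (y \<otimes> \<theta> t) = len (\<theta> (inv y \<otimes> t))"
    proof -
      have "\<theta> (inv y \<otimes> t) = inv (\<theta> y) \<otimes> \<theta> t" using th_hom[OF iy tP] th_inv[OF yP] by simp
      then show ?thesis using thy yc by simp
    qed
    also have "\<dots> = len (inv y \<otimes> t)" using len_theta[OF J th_into th_hom th_inj th_J' iyt] .
    also have "\<dots> = len (inv (t \<otimes> y))" using yc tc S_inv'[OF tS] by (simp add: inv_mult_group)
    also have "\<dots> = len (t \<otimes> y)" using len_inv yc tc by simp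
    finally have eqlen: "len (y \<otimes> \<theta> t) = len (t \<otimes> y)" .
    have "t \<otimes> y \<otimes> \<theta> t = y" using twisted[OF yc tS t'S eqlen same] .
    then show ?thesis using sa tau by simp
  qed
qed simp

end

theorem mainTheorem9:
  fixes G :: "'w monoid" and S J :: "'w set" and s :: 'w
    and \<tau> :: "'w \<times> ('w \<times> ('w \<Rightarrow> 'w))"
  assumes "coxeter_system G S"
    and "finite (carrier G)"
    and "J \<subseteq> S"
    and "s \<in> S"
    and "\<tau> \<in> KJ G S J"
  shows "ht G S J (simple_act G S J s \<tau>) = ht G S J \<tau> \<longleftrightarrow> simple_act G S J s \<tau> = \<tau>"
proof -
  have grp: "group G" using assms(1) by (simp add: coxeter_system_def)
  interpret cox G S by (intro cox.intro grp cox_axioms.intro assms(1))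
  show ?thesis using main_cox assms(3-5) by blast
qed

end
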